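(* Let $y\in\mathfrak M_0$ and let $(x_n)_{n\ge1}$ be a norm-bounded sequence in $\mathfrak M$ such that $\lim_{n\to\infty}\chi(x_n)$ exists. Then \[\lim_{n\to\infty}\chi\Big(x_n\exp\Big(\frac1{|I_n|}\sum_{k\in I_n}\gamma_k(y)\Big)\Big)=\Big(\lim_{n\to\infty}\chi(x_n)\Big)e^{\chi(y)}.\]
   Context: $\mathcal I$ is the set of finite intervals of $\mathbb Z$. $(\mathfrak M,(M_I)_{I\in\mathcal I})$ is a quasi-local algebra: unital $C^*$-algebra $\mathfrak M$, $W^*$-subalgebras $M_I$ with $M_I\subseteq M_J$ for $I\subseteq J$, $\mathfrak M_0:=\bigcup_IM_I$ dense, common unit, $M_I$ and $M_J$ commuting when $I\cap J=\varnothing$. $\gamma:\mathbb Z\curvearrowright\mathfrak M$ is an action by $*$-automorphisms with $\gamma_j(M_I)=M_{I+j}$. $\chi$ is a $\gamma$-invariant multiplicative state ($\chi(xy)=\chi(x)\chi(y)$ for $x\in M_I,y\in M_J$, $I\cap J=\varnothing$). $(I_n)$ is an increasing sequence in $\mathcal I$ with union $\mathbb Z$. *)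

theory Defs
  imports "HOL-Analysis.Analysis"
begin

text \<open>A unital C*-algebra is modelled as the whole of a type 'a, which is a real Banach
  algebra with unit (this provides the norm, the algebra structure and the exponential
  series), together with a complex scalar multiplication cmul (compatible with the real
  one) and an involution st.\<close>

definition unital_cstar_algebra ::
  "(complex \<Rightarrow> 'a::{real_normed_algebra_1,banach} \<Rightarrow> 'a) \<Rightarrow> ('a \<Rightarrow> 'a) \<Rightarrow> bool" where
  "unital_cstar_algebra cmul st \<longleftrightarrow>
     (\<forall>a x y. cmul a (x + y) = cmul a x + cmul a y) \<and>
     (\<forall>a b x. cmul (a + b) x = cmul a x + cmul b x) \<and>
     (\<forall>a b x. cmul (a * b) x = cmul a (cmul b x)) \<and>
     (\<forall>r x. cmul (complex_of_real r) x = r *\<^sub>R x) \<and>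
     (\<forall>a x y. cmul a (x * y) = cmul a x * y \<and> cmul a (x * y) = x * cmul a y) \<and>
     (\<forall>a x. norm (cmul a x) = cmod a * norm x) \<and>
     (\<forall>x. st (st x) = x) \<and>
     (\<forall>x y. st (x + y) = st x + st y) \<and>
     (\<forall>x y. st (x * y) = st y * st x) \<and>
     (\<forall>a x. st (cmul a x) = cmul (cnj a) (st x)) \<and>
     (\<forall>x. norm (st x * x) = (norm x)\<^sup>2)"

definition bounded_cfunctional ::
  "(complex \<Rightarrow> 'a::real_normed_vector \<Rightarrow> 'a) \<Rightarrow> 'a set \<Rightarrow> ('a \<Rightarrow> complex) \<Rightarrow> bool" where
  "bounded_cfunctional cmul S f \<longleftrightarrow>
     (\<forall>x\<in>S. \<forall>y\<in>S. f (x + y) = f x + f y) \<and>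
     (\<forall>c. \<forall>x\<in>S. f (cmul c x) = c * f x) \<and>
     (\<exists>C. \<forall>x\<in>S. cmod (f x) \<le> C * norm x)"

definition fnorm :: "'a::real_normed_vector set \<Rightarrow> ('a \<Rightarrow> complex) \<Rightarrow> real" where
  "fnorm S f = Sup {cmod (f x) | x. x \<in> S \<and> norm x \<le> 1}"

text \<open>P is a predual of S: P is a complex subspace of the bounded functionals on S
  (functions vanishing off S), and the evaluation map x \<mapsto> (\<phi> \<mapsto> \<phi> x) is an isometric
  bijection of S onto the (bounded, linear) dual of P.\<close>

definition is_predual ::
  "(complex \<Rightarrow> 'a::real_normed_vector \<Rightarrow> 'a) \<Rightarrow> 'a set \<Rightarrow> ('a \<Rightarrow> complex) set \<Rightarrow> bool" where
  "is_predual cmul S P \<longleftrightarrow>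
     (\<forall>\<phi>\<in>P. bounded_cfunctional cmul S \<phi> \<and> (\<forall>x. x \<notin> S \<longrightarrow> \<phi> x = 0)) \<and>
     (\<lambda>_. 0) \<in> P \<and>
     (\<forall>\<phi>\<in>P. \<forall>\<psi>\<in>P. (\<lambda>x. \<phi> x + \<psi> x) \<in> P) \<and>
     (\<forall>c. \<forall>\<phi>\<in>P. (\<lambda>x. c * \<phi> x) \<in> P) \<and>
     (\<forall>\<Phi>. ((\<forall>\<phi>\<in>P. \<forall>\<psi>\<in>P. \<Phi> (\<lambda>x. \<phi> x + \<psi> x) = \<Phi> \<phi> + \<Phi> \<psi>) \<and>
           (\<forall>c. \<forall>\<phi>\<in>P. \<Phi> (\<lambda>x. c * \<phi> x) = c * \<Phi> \<phi>) \<and>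
           (\<exists>C. \<forall>\<phi>\<in>P. cmod (\<Phi> \<phi>) \<le> C * fnorm S \<phi>))
        \<longrightarrow> (\<exists>!x. x \<in> S \<and> (\<forall>\<phi>\<in>P. \<Phi> \<phi> = \<phi> x))) \<and>
     (\<forall>x\<in>S. norm x = Sup {cmod (\<phi> x) | \<phi>. \<phi> \<in> P \<and> fnorm S \<phi> \<le> 1})"

text \<open>A W*-subalgebra: a unital (common unit) C*-subalgebra which is a W*-algebra,
  i.e. (Sakai) a dual Banach space.\<close>

definition wstar_subalgebra ::
  "(complex \<Rightarrow> 'a::{real_normed_algebra_1,banach} \<Rightarrow> 'a) \<Rightarrow> ('a \<Rightarrow> 'a) \<Rightarrow> 'a set \<Rightarrow> bool" where
  "wstar_subalgebra cmul st S \<longleftrightarrow>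
     1 \<in> S \<and>
     (\<forall>x\<in>S. \<forall>y\<in>S. x + y \<in> S \<and> x * y \<in> S) \<and>
     (\<forall>c. \<forall>x\<in>S. cmul c x \<in> S) \<and>
     (\<forall>x\<in>S. st x \<in> S) \<and>
     closed S \<and>
     (\<exists>P. is_predual cmul S P)"

definition fin_interval :: "int set \<Rightarrow> bool" where
  "fin_interval I \<longleftrightarrow> (\<exists>a b. a \<le> b \<and> I = {a..b})"

definition quasi_local ::
  "(complex \<Rightarrow> 'a::{real_normed_algebra_1,banach} \<Rightarrow> 'a) \<Rightarrow> ('a \<Rightarrow> 'a) \<Rightarrow> (int set \<Rightarrow> 'a set) \<Rightarrow> bool" where
  "quasi_local cmul st M \<longleftrightarrow>
     unital_cstar_algebra cmul st \<and>
     (\<forall>I. fin_interval I \<longrightarrow> wstar_subalgebra cmul st (M I)) \<and>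
     (\<forall>I J. fin_interval I \<longrightarrow> fin_interval J \<longrightarrow> I \<subseteq> J \<longrightarrow> M I \<subseteq> M J) \<and>
     closure (\<Union>{M I | I. fin_interval I}) = UNIV \<and>
     (\<forall>I J. fin_interval I \<longrightarrow> fin_interval J \<longrightarrow> I \<inter> J = {} \<longrightarrow>
        (\<forall>x\<in>M I. \<forall>y\<in>M J. x * y = y * x))"

definition local_part :: "(int set \<Rightarrow> 'a set) \<Rightarrow> 'a set" where
  "local_part M = \<Union>{M I | I. fin_interval I}"

definition star_automorphism ::
  "(complex \<Rightarrow> 'a::{real_normed_algebra_1,banach} \<Rightarrow> 'a) \<Rightarrow> ('a \<Rightarrow> 'a) \<Rightarrow> ('a \<Rightarrow> 'a) \<Rightarrow> bool" where
  "star_automorphism cmul st g \<longleftrightarrow>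
     bij g \<and>
     (\<forall>x y. g (x + y) = g x + g y) \<and>
     (\<forall>c x. g (cmul c x) = cmul c (g x)) \<and>
     (\<forall>x y. g (x * y) = g x * g y) \<and>
     (\<forall>x. g (st x) = st (g x))"

definition translation_action ::
  "(complex \<Rightarrow> 'a::{real_normed_algebra_1,banach} \<Rightarrow> 'a) \<Rightarrow> ('a \<Rightarrow> 'a) \<Rightarrow> (int set \<Rightarrow> 'a set)
     \<Rightarrow> (int \<Rightarrow> 'a \<Rightarrow> 'a) \<Rightarrow> bool" where
  "translation_action cmul st M \<gamma> \<longleftrightarrow>
     \<gamma> 0 = id \<and>
     (\<forall>j k. \<gamma> (j + k) = \<gamma> j \<circ> \<gamma> k) \<and>
     (\<forall>j. star_automorphism cmul st (\<gamma> j)) \<and>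
     (\<forall>j I. fin_interval I \<longrightarrow> \<gamma> j ` M I = M ((\<lambda>i. i + j) ` I))"

definition is_state ::
  "(complex \<Rightarrow> 'a::{real_normed_algebra_1,banach} \<Rightarrow> 'a) \<Rightarrow> ('a \<Rightarrow> 'a) \<Rightarrow> ('a \<Rightarrow> complex) \<Rightarrow> bool" where
  "is_state cmul st \<omega> \<longleftrightarrow>
     (\<forall>x y. \<omega> (x + y) = \<omega> x + \<omega> y) \<and>
     (\<forall>c x. \<omega> (cmul c x) = c * \<omega> x) \<and>
     (\<forall>x. Im (\<omega> (st x * x)) = 0 \<and> Re (\<omega> (st x * x)) \<ge> 0) \<and>
     \<omega> 1 = 1"

definition invariant_multiplicative_state ::
  "(complex \<Rightarrow> 'a::{real_normed_algebra_1,banach} \<Rightarrow> 'a) \<Rightarrow> ('a \<Rightarrow> 'a) \<Rightarrow> (int set \<Rightarrow> 'a set)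
     \<Rightarrow> (int \<Rightarrow> 'a \<Rightarrow> 'a) \<Rightarrow> ('a \<Rightarrow> complex) \<Rightarrow> bool" where
  "invariant_multiplicative_state cmul st M \<gamma> \<omega> \<longleftrightarrow>
     is_state cmul st \<omega> \<and>
     (\<forall>j x. \<omega> (\<gamma> j x) = \<omega> x) \<and>
     (\<forall>I J. fin_interval I \<longrightarrow> fin_interval J \<longrightarrow> I \<inter> J = {} \<longrightarrow>
        (\<forall>x\<in>M I. \<forall>y\<in>M J. \<omega> (x * y) = \<omega> x * \<omega> y))"

end

theory Submission imports Defs "HOL-Computational_Algebra.Formal_Power_Series" begin

lemma gchoose_half_bound: "\<bar>((1/2::real) gchoose n)\<bar> \<le> 1"
proof (induction n)
  case 0 then show ?case by simp
next
  case (Suc k)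
  have e: "real (Suc k) * ((1/2::real) gchoose Suc k) = (1/2 - real k) * ((1/2::real) gchoose k)"
    using gbinomial_mult_1[of "1/2::real" k] by (simp add: algebra_simps)
  have "real (Suc k) * \<bar>(1/2::real) gchoose Suc k\<bar> = \<bar>1/2 - real k\<bar> * \<bar>(1/2::real) gchoose k\<bar>"
    using arg_cong[OF e, of abs] by (simp add: abs_mult)
  also have "\<dots> \<le> real (Suc k) * 1"
    using Suc by (intro mult_mono) auto
  finally show ?case by (simp del: of_nat_Suc)
qed

locale cstar =
  fixes cmul :: "complex \<Rightarrow> 'a::{real_normed_algebra_1,banach} \<Rightarrow> 'a" and st :: "'a \<Rightarrow> 'a"
  assumes C: "unital_cstar_algebra cmul st"
begin

lemma cmul_add: "cmul a (x + y) = cmul a x + cmul a y" using C unfolding unital_cstar_algebra_def by auto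
lemma cmul_addc: "cmul (a + b) x = cmul a x + cmul b x" using C unfolding unital_cstar_algebra_def by auto
lemma cmul_mult: "cmul (a * b) x = cmul a (cmul b x)" using C unfolding unital_cstar_algebra_def by auto
lemma cmul_real: "cmul (complex_of_real r) x = r *\<^sub>R x" using C unfolding unital_cstar_algebra_def by auto
lemma cmul_left: "cmul a (x * y) = cmul a x * y" using C unfolding unital_cstar_algebra_def by auto
lemma cmul_right: "cmul a (x * y) = x * cmul a y" using C unfolding unital_cstar_algebra_def by metis
lemma norm_cmul: "norm (cmul a x) = cmod a * norm x" using C unfolding unital_cstar_algebra_def by auto
lemma st_st[simp]: "st (st x) = x" using C unfolding unital_cstar_algebra_def by auto
lemma st_add: "st (x + y) = st x + st y" using C unfolding unital_cstar_algebra_def by auto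
lemma st_mult: "st (x * y) = st y * st x" using C unfolding unital_cstar_algebra_def by auto
lemma st_cmul: "st (cmul a x) = cmul (cnj a) (st x)" using C unfolding unital_cstar_algebra_def by auto
lemma cstar_id: "norm (st x * x) = (norm x)\<^sup>2" using C unfolding unital_cstar_algebra_def by auto

lemma st_zero[simp]: "st 0 = 0"
  using st_add[of 0 0] by simp
lemma st_minus: "st (- x) = - st x"
proof -
  have "st x + st (-x) = 0" using st_add[of x "-x"] by simp
  from minus_unique[OF this] show ?thesis by simp
qed
lemma st_diff: "st (x - y) = st x - st y"
  using st_add[of x "-y"] st_minus[of y] by simp
lemma st_scaleR: "st (r *\<^sub>R x) = r *\<^sub>R st x"
  using st_cmul[of "complex_of_real r" x] by (simp add: cmul_real)
lemma st_one[simp]: "st 1 = 1"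
  using st_mult[of 1 "st 1"] by simp
lemma st_sum: "st (sum f A) = sum (\<lambda>i. st (f i)) A"
  by (induction A rule: infinite_finite_induct) (auto simp: st_add)
lemma st_power: "st (x ^ n) = (st x) ^ n"
  by (induction n) (auto simp: st_mult power_commutes)
lemma cmul_one: "cmul 1 x = x"
  using cmul_real[of 1 x] by simp
lemma cmul_one_mult: "cmul a x = cmul a 1 * x"
  using cmul_left[of a 1 x] by simp
lemma cmul_one_mult': "cmul a x = x * cmul a 1"
  using cmul_right[of a x 1] by simp
lemma cmul_cmul_mult: "cmul a x * cmul b y = cmul (a * b) (x * y)"
  by (metis cmul_left cmul_mult cmul_right)
lemma cmul_zero[simp]: "cmul a 0 = 0"
  using cmul_add[of a 0 0] by simp

lemma norm_st: "norm (st x) = norm x"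
proof -
  have le: "norm z \<le> norm (st z)" for z
  proof (cases "z = 0")
    case False
    have "(norm z)^2 \<le> norm (st z) * norm z"
      using cstar_id[of z] norm_mult_ineq[of "st z" z] by simp
    then show ?thesis using False by (simp add: power2_eq_square)
  qed simp
  show ?thesis using le[of x] le[of "st x"] by simp
qed

lemma bl_st: "bounded_linear st"
  by (rule bounded_linear_intro[where K=1]) (auto simp: st_add st_scaleR norm_st)

lemma sqrt_exists:
  assumes sz: "st z = z" and nz: "norm z < 1"
  shows "\<exists>k. st k = k \<and> k * k = 1 - z \<and> (\<forall>w. w * z = z * w \<longrightarrow> w * k = k * w)"
proof -
  define c where "c n = ((1/2::real) gchoose n)" for n
  define a where "a n = c n *\<^sub>R (-z) ^ n" for n
  have na: "norm (a n) \<le> norm z ^ n" for n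
  proof -
    have "norm (a n) = \<bar>c n\<bar> * norm ((-z)^n)" by (simp add: a_def)
    also have "\<dots> \<le> 1 * norm z ^ n"
      using gchoose_half_bound[of n] norm_power_ineq[of "-z" n]
      by (intro mult_mono) (auto simp: c_def)
    finally show ?thesis by simp
  qed
  have sa: "summable (\<lambda>n. norm (a n))"
    by (rule summable_comparison_test[OF _ summable_geometric[of "norm z"]]) (use na nz in auto)
  have sa': "summable a" using sa summable_norm_cancel by blast
  define k where "k = suminf a"
  have "k * k = (\<Sum>n. \<Sum>i\<le>n. a i * a (n - i))"
    unfolding k_def by (rule Cauchy_product[OF sa sa])
  also have "\<dots> = (\<Sum>n. ((1::real) gchoose n) *\<^sub>R (-z)^n)"
  proof -
    have "(\<Sum>i\<le>n. a i * a (n - i)) = ((1::real) gchoose n) *\<^sub>R (-z)^n" for n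
    proof -
      have "(\<Sum>i\<le>n. a i * a (n - i)) = (\<Sum>i\<le>n. (c i * c (n - i)) *\<^sub>R (-z)^n)"
        by (intro sum.cong refl) (simp add: a_def power_add[symmetric])
      also have "\<dots> = (\<Sum>i\<le>n. c i * c (n - i)) *\<^sub>R (-z)^n"
        by (simp add: scaleR_sum_left)
      also have "(\<Sum>i\<le>n. c i * c (n - i)) = (1::real) gchoose n"
        using gbinomial_Vandermonde[of "1/2::real" "1/2" n] by (simp add: c_def atLeast0AtMost)
      finally show ?thesis .
    qed
    then show ?thesis by simp
  qed
  also have "\<dots> = (\<Sum>n\<in>{0,1}. ((1::real) gchoose n) *\<^sub>R (-z)^n)"
  proof (rule suminf_finite)
    fix n :: nat assume "n \<notin> {0,1}"
    then have "n > 1" by auto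
    then have "((1::real) gchoose n) = 0"
      using binomial_gbinomial[of 1 n, where 'a=real] by (simp add: binomial_eq_0)
    then show "((1::real) gchoose n) *\<^sub>R (-z)^n = 0" by simp
  qed simp
  also have "\<dots> = 1 - z" by simp
  finally have kk: "k * k = 1 - z" .
  have stk: "st k = k"
  proof -
    have "st k = (\<Sum>n. st (a n))" unfolding k_def by (rule bounded_linear.suminf[OF bl_st sa'])
    also have "\<dots> = k" unfolding k_def a_def by (simp add: st_scaleR st_power st_minus sz)
    finally show ?thesis .
  qed
  have comm: "w * k = k * w" if wz: "w * z = z * w" for w
  proof -
    have "w * k = (\<Sum>n. w * a n)" unfolding k_def by (rule suminf_mult[OF sa', symmetric])
    also have "\<dots> = (\<Sum>n. a n * w)"
    proof -
      have "w * (-z) = (-z) * w" using wz by simp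
      then have "w * (-z)^n = (-z)^n * w" for n using power_commuting_commutes by metis
      then show ?thesis by (simp add: a_def)
    qed
    also have "\<dots> = k * w" unfolding k_def by (rule suminf_mult2[OF sa', symmetric])
    finally show ?thesis .
  qed
  show ?thesis using kk stk comm by blast
qed

end

lemma quad_nonneg:
  fixes A U C :: real
  assumes "C \<ge> 0" "\<And>s. 0 \<le> A + 2 * s * U + s^2 * C"
  shows "U^2 \<le> A * C"
proof (cases "C = 0")
  case True
  show ?thesis
  proof (cases "U = 0")
    case False
    have "0 \<le> A + 2 * (-(A+1)/(2*U)) * U + (-(A+1)/(2*U))^2 * C" by (rule assms(2))
    with False True show ?thesis by (simp add: field_simps)
  qed (use assms True in simp)
next
  case False
  then have Cp: "C > 0" using assms(1) by simp
  have "0 \<le> A + 2 * (-U/C) * U + (-U/C)^2 * C" by (rule assms(2))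
  then have "0 \<le> A - U^2 / C" using Cp by (simp add: field_simps power2_eq_square)
  then have "U^2 / C \<le> A" by simp
  then show ?thesis using Cp by (simp add: field_simps)
qed

context cstar begin

lemma cmul_zeroc: "cmul 0 x = 0"
  using cmul_real[of 0 x] by simp

lemma aut_norm_le:
  assumes G: "star_automorphism cmul st g"
  shows "norm (g x) \<le> norm x"
proof -
  have g_add: "g (x + y) = g x + g y" for x y using G unfolding star_automorphism_def by blast
  have g_mult: "g (x * y) = g x * g y" for x y using G unfolding star_automorphism_def by blast
  have g_cmul: "g (cmul c x) = cmul c (g x)" for c x using G unfolding star_automorphism_def by blast
  have g_st: "g (st x) = st (g x)" for x using G unfolding star_automorphism_def by blast
  have surj: "surj g" using G unfolding star_automorphism_def bij_def by blast
  have g_scaleR: "g (r *\<^sub>R x) = r *\<^sub>R g x" for r x using g_cmul[of "complex_of_real r" x] by (simp add: cmul_real)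
  have g1: "g 1 = 1"
  proof -
    obtain p where p: "g p = 1" using surj by (metis surjD)
    have "g 1 = g 1 * g p" using p by simp
    also have "\<dots> = 1" using p g_mult[of 1 p] by simp
    finally show ?thesis .
  qed
  have sa: "norm (g h) \<le> 1" if sh: "st h = h" and nh: "norm h < 1" for h
  proof -
    define z where "z = h * h"
    have sz: "st z = z" using sh by (simp add: z_def st_mult)
    have "norm z \<le> norm h * norm h" unfolding z_def by (rule norm_mult_ineq)
    also have "\<dots> < 1" using mult_left_le_one_le[of "norm h" "norm h"] nh by simp
    finally have nz: "norm z < 1" .
    obtain k where sk: "st k = k" and kk: "k * k = 1 - z" and kc: "\<And>w. w * z = z * w \<Longrightarrow> w * k = k * w"
      using sqrt_exists[OF sz nz] by blast
    have hk: "h * k = k * h" by (rule kc) (simp add: z_def mult.assoc)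
    define a where "a = g h"
    define s where "s = g k"
    have sta: "st a = a" unfolding a_def using sh g_st by metis
    have sts: "st s = s" unfolding s_def using sk g_st by metis
    have as: "a * s = s * a" unfolding a_def s_def using hk g_mult by metis
    have aass: "a * a + s * s = 1"
    proof -
      have "h * h + k * k = 1" using kk z_def by simp
      then have "g (h * h + k * k) = 1" using g1 by simp
      then show ?thesis unfolding a_def s_def by (simp add: g_add g_mult)
    qed
    define u where "u = a + cmul \<i> s"
    have stu: "st u = a + cmul (- \<i>) s" unfolding u_def by (simp add: st_add st_cmul sta sts)
    have canc: "cmul \<i> w + cmul (- \<i>) w = 0" for w
      using cmul_addc[of "\<i>" "-\<i>" w] by (simp add: cmul_zeroc)
    have "st u * u = (a + cmul (- \<i>) s) * (a + cmul \<i> s)" using stu by (simp add: u_def)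
    also have "\<dots> = a * a + a * cmul \<i> s + cmul (- \<i>) s * a + cmul (- \<i>) s * cmul \<i> s"
      by (simp add: algebra_simps)
    also have "\<dots> = a * a + (cmul \<i> (a * s) + cmul (- \<i>) (a * s)) + cmul (- \<i> * \<i>) (s * s)"
      by (simp add: cmul_cmul_mult cmul_right[symmetric] cmul_left[symmetric] as cmul_mult[symmetric])
    also have "\<dots> = 1" using canc aass by (simp add: cmul_one)
    finally have "st u * u = 1" .
    then have "(norm u)^2 = 1" using cstar_id[of u] by simp
    then have nu: "norm u = 1" by (simp add: power2_eq_1_iff) (metis norm_ge_zero one_neq_neg_one neg_equal_zero le_minus_iff zero_less_one linorder_not_le)
    have "u + st u = 2 *\<^sub>R a" using canc[of s] unfolding stu by (simp add: u_def algebra_simps scaleR_2)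
    then have "norm (2 *\<^sub>R a) \<le> norm u + norm (st u)" by (metis norm_triangle_ineq)
    then have "2 * norm a \<le> 2" using nu by (simp add: norm_st)
    then show ?thesis unfolding a_def by simp
  qed
  have "norm (g x) \<le> norm x + e" if e: "e > 0" for e
  proof -
    define t where "t = norm x + e"
    have tp: "t > 0" using e by (simp add: t_def add_nonneg_pos)
    define h where "h = (1 / t^2) *\<^sub>R (st x * x)"
    have sh: "st h = h" unfolding h_def by (simp add: st_scaleR st_mult)
    have "norm h = (norm x)^2 / t^2" unfolding h_def using cstar_id[of x] tp by simp
    also have "\<dots> < 1" using tp e by (simp add: t_def power_strict_mono)
    finally have "norm (g h) \<le> 1" using sa[OF sh] by simp
    moreover have "g h = (1 / t^2) *\<^sub>R (st (g x) * g x)" unfolding h_def by (simp add: g_scaleR g_mult g_st)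
    ultimately have "(norm (g x))^2 / t^2 \<le> 1" using cstar_id[of "g x"] tp by simp
    then have "(norm (g x))^2 \<le> t^2" using tp by simp
    then have "norm (g x) \<le> t" using tp by (simp add: abs_le_square_iff power2_le_iff_abs_le)
    then show ?thesis by (simp add: t_def)
  qed
  then show ?thesis by (rule field_le_epsilon)
qed

end

locale cstate = cstar +
  fixes \<omega> :: "'a::{real_normed_algebra_1,banach} \<Rightarrow> complex"
  assumes S: "is_state cmul st \<omega>"
begin

lemma om_add: "\<omega> (x + y) = \<omega> x + \<omega> y" using S unfolding is_state_def by blast
lemma om_cmul: "\<omega> (cmul c x) = c * \<omega> x" using S unfolding is_state_def by blast
lemma om_pos_im: "Im (\<omega> (st x * x)) = 0" using S unfolding is_state_def by blast
lemma om_pos_re: "Re (\<omega> (st x * x)) \<ge> 0" using S unfolding is_state_def by blast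
lemma om_one[simp]: "\<omega> 1 = 1" using S unfolding is_state_def by blast
lemma om_zero[simp]: "\<omega> 0 = 0" using om_add[of 0 0] by simp
lemma om_minus: "\<omega> (- x) = - \<omega> x"
proof -
  have "\<omega> x + \<omega> (-x) = 0" using om_add[of x "-x"] by simp
  from minus_unique[OF this] show ?thesis by simp
qed
lemma om_diff: "\<omega> (x - y) = \<omega> x - \<omega> y"
  using om_add[of x "-y"] om_minus[of y] by simp
lemma om_scaleR: "\<omega> (r *\<^sub>R x) = of_real r * \<omega> x"
  using om_cmul[of "complex_of_real r" x] by (simp add: cmul_real)
lemma om_sum: "\<omega> (sum f A) = (\<Sum>i\<in>A. \<omega> (f i))"
  by (induction A rule: infinite_finite_induct) (auto simp: om_add)

lemma om_real: "\<omega> (st x * x) = of_real (Re (\<omega> (st x * x)))"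
  using om_pos_im[of x] by (simp add: complex_eq_iff)

lemma om_st: "\<omega> (st x) = cnj (\<omega> x)"
proof -
  have "st (x + 1) * (x + 1) = st x * x + st x + x + 1" by (simp add: st_add algebra_simps)
  then have "Im (\<omega> (st x * x) + \<omega> (st x) + \<omega> x + 1) = 0"
    using om_pos_im[of "x + 1"] by (simp add: om_add)
  then have i1: "Im (\<omega> (st x)) + Im (\<omega> x) = 0" using om_pos_im[of x] by simp
  have "st (x + cmul \<i> 1) * (x + cmul \<i> 1) = (st x + cmul (- \<i>) 1) * (x + cmul \<i> 1)"
    by (simp add: st_add st_cmul)
  also have "\<dots> = st x * x + st x * cmul \<i> 1 + cmul (- \<i>) 1 * x + cmul (- \<i>) 1 * cmul \<i> 1"
    by (simp only: distrib_left distrib_right add_ac)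
  also have "\<dots> = st x * x + cmul \<i> (st x) + cmul (- \<i>) x + 1"
    by (simp add: cmul_cmul_mult cmul_one_mult[symmetric] cmul_one_mult'[symmetric] cmul_one cmul_mult[symmetric])
  finally have "st (x + cmul \<i> 1) * (x + cmul \<i> 1) = st x * x + cmul \<i> (st x) + cmul (- \<i>) x + 1" .
  then have "Im (\<omega> (st x * x) + \<i> * \<omega> (st x) + (- \<i>) * \<omega> x + 1) = 0"
    using om_pos_im[of "x + cmul \<i> 1"] by (simp add: om_add om_cmul)
  then have i2: "Re (\<omega> (st x)) - Re (\<omega> x) = 0" using om_pos_im[of x] by simp
  show ?thesis using i1 i2 by (simp add: complex_eq_iff)
qed

lemma CS: "(cmod (\<omega> (st a * b)))^2 \<le> Re (\<omega> (st a * a)) * Re (\<omega> (st b * b))"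
proof (cases "\<omega> (st a * b) = 0")
  case True
  then show ?thesis using om_pos_re[of a] om_pos_re[of b] by simp
next
  case False
  define u where "u = \<omega> (st a * b)"
  have u0: "u \<noteq> 0" using False u_def by simp
  define l where "l = cnj u / of_real (cmod u)"
  have ll: "cnj l * l = 1" using u0 unfolding l_def
    by (simp add: complex_norm_square[symmetric] power2_eq_square field_simps)
  have lu: "l * u = of_real (cmod u)"
  proof -
    have "u * cnj u = of_real (cmod u) * of_real (cmod u)" by (simp only: complex_norm_square[symmetric, of u] power2_eq_square of_real_mult)
    then show ?thesis using u0 unfolding l_def by (simp add: field_simps)
  qed
  define b' where "b' = cmul l b"
  have e1: "\<omega> (st a * b') = of_real (cmod u)"
    unfolding b'_def by (simp add: cmul_right[symmetric] om_cmul u_def[symmetric] lu)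
  have e2: "\<omega> (st b' * a) = of_real (cmod u)"
  proof -
    have "st b' * a = st (st a * b')" by (simp add: st_mult)
    then show ?thesis using e1 by (simp add: om_st)
  qed
  have e3: "st b' * b' = st b * b"
    unfolding b'_def by (simp add: st_cmul cmul_cmul_mult ll cmul_one)
  define A where "A = Re (\<omega> (st a * a))"
  define Cc where "Cc = Re (\<omega> (st b * b))"
  have q: "0 \<le> A + 2 * s * cmod u + s^2 * Cc" for s
  proof -
    have "st (a + s *\<^sub>R b') * (a + s *\<^sub>R b') =
        st a * a + s *\<^sub>R (st a * b') + s *\<^sub>R (st b' * a) + (s^2) *\<^sub>R (st b' * b')"
      by (simp add: st_add st_scaleR algebra_simps power2_eq_square)
    then have "\<omega> (st (a + s *\<^sub>R b') * (a + s *\<^sub>R b')) =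
        \<omega> (st a * a) + of_real s * of_real (cmod u) + of_real s * of_real (cmod u) + of_real (s^2) * \<omega> (st b * b)"
      by (simp add: om_add om_scaleR e1 e2 e3)
    then have "Re (\<omega> (st (a + s *\<^sub>R b') * (a + s *\<^sub>R b'))) = A + 2 * s * cmod u + s^2 * Cc"
      unfolding A_def Cc_def by simp
    then show ?thesis using om_pos_re[of "a + s *\<^sub>R b'"] by simp
  qed
  have "(cmod u)^2 \<le> A * Cc"
    by (rule quad_nonneg[OF _ q]) (simp add: Cc_def om_pos_re)
  then show ?thesis unfolding u_def A_def Cc_def .
qed

lemma om_bound1:
  assumes "norm x < 1" shows "cmod (\<omega> x) \<le> 1"
proof -
  define z where "z = st x * x"
  have sz: "st z = z" by (simp add: z_def st_mult)
  have nz: "norm z < 1" using cstar_id[of x] assms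
    by (simp add: z_def power2_eq_square) (metis mult_left_le_one_le norm_ge_zero order_le_less_trans less_eq_real_def)
  obtain k where sk: "st k = k" and kk: "k * k = 1 - z" using sqrt_exists[OF sz nz] by blast
  have "0 \<le> Re (\<omega> (st k * k))" by (rule om_pos_re)
  also have "\<omega> (st k * k) = 1 - \<omega> z" using sk kk by (simp add: om_diff)
  finally have rz: "Re (\<omega> z) \<le> 1" by simp
  have "(cmod (\<omega> (st 1 * x)))^2 \<le> Re (\<omega> (st 1 * 1)) * Re (\<omega> (st x * x))" by (rule CS)
  then have "(cmod (\<omega> x))^2 \<le> 1" using rz by (simp add: z_def)
  then show ?thesis by (simp add: power_le_one_iff abs_le_square_iff power2_le_iff_abs_le)
qed

lemma om_bound: "cmod (\<omega> x) \<le> norm x"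
proof -
  have "cmod (\<omega> x) \<le> norm x + e" if e: "e > 0" for e
  proof -
    define t where "t = norm x + e"
    have tp: "t > 0" using e by (simp add: t_def add_nonneg_pos)
    have "norm ((1/t) *\<^sub>R x) < 1" using tp e by (simp add: t_def field_simps)
    then have "cmod (\<omega> ((1/t) *\<^sub>R x)) \<le> 1" by (rule om_bound1)
    then have "cmod (\<omega> x) / t \<le> 1" using tp by (simp add: om_scaleR norm_mult norm_divide)
    then show ?thesis using tp by (simp add: t_def field_simps norm_divide)
  qed
  then show ?thesis by (rule field_le_epsilon)
qed

lemma bl_om: "bounded_linear \<omega>"
proof (rule bounded_linear_intro[where K=1])
  show "\<omega> (r *\<^sub>R x) = r *\<^sub>R \<omega> x" for r x using om_scaleR[of r x] by (simp add: scaleR_conv_of_real)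
qed (auto simp: om_add om_bound)

end

lemma finite_subset_mono_union:
  fixes In :: "nat \<Rightarrow> 'b set"
  assumes mono: "\<And>n. In n \<subseteq> In (Suc n)" and F: "finite F" "F \<subseteq> (\<Union>n. In n)"
  shows "\<exists>n. F \<subseteq> In n"
  using F
proof (induction F rule: finite_induct)
  case empty then show ?case by simp
next
  case (insert i F)
  then obtain n1 where n1: "F \<subseteq> In n1" by auto
  from insert obtain n2 where n2: "i \<in> In n2" by auto
  have "In n1 \<subseteq> In (max n1 n2)" "In n2 \<subseteq> In (max n1 n2)"
    by (rule lift_Suc_mono_le[of In, OF mono]; simp)+
  then show ?case using n1 n2 by blast
qed

lemma card_tendsto:
  fixes In :: "nat \<Rightarrow> int set"
  assumes fin: "\<And>n. finite (In n)" and mono: "\<And>n. In n \<subseteq> In (Suc n)" and U: "(\<Union>n. In n) = UNIV"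
  shows "filterlim (\<lambda>n. real (card (In n))) at_top sequentially"
proof (rule filterlim_at_top[THEN iffD2], intro allI)
  fix Z :: real
  define m where "m = nat \<lceil>Z\<rceil>"
  obtain n0 where n0: "{0..int m} \<subseteq> In n0"
    using finite_subset_mono_union[of In "{0..int m}"] mono U by auto
  have "Z \<le> real (card (In n))" if "n \<ge> n0" for n
  proof -
    have "{0..int m} \<subseteq> In n" using n0 lift_Suc_mono_le[of In, OF mono that] by blast
    then have "card {0..int m} \<le> card (In n)" using fin by (intro card_mono) auto
    then have "m + 1 \<le> card (In n)" by simp
    moreover have "Z \<le> real m" unfolding m_def by linarith
    ultimately show ?thesis by linarith
  qed
  then show "eventually (\<lambda>n. Z \<le> real (card (In n))) sequentially"
    unfolding eventually_sequentially by blast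
qed

context cstar begin

lemma phi_power: "cmul (c ^ n) 1 = (cmul c 1) ^ n"
proof (induction n)
  case 0 then show ?case by (simp add: cmul_one)
next
  case (Suc n)
  have "cmul (c ^ Suc n) 1 = cmul c 1 * cmul (c ^ n) 1" by (simp add: cmul_cmul_mult)
  then show ?case using Suc by simp
qed

lemma phi_scaleR: "cmul (r *\<^sub>R c) 1 = r *\<^sub>R cmul c 1"
  by (simp add: scaleR_conv_of_real cmul_mult cmul_real)

lemma bl_phi: "bounded_linear (\<lambda>c. cmul c 1)"
proof (rule bounded_linear_intro[where K=1])
  show "cmul (c + d) 1 = cmul c 1 + cmul d 1" for c d by (rule cmul_addc)
  show "cmul (r *\<^sub>R c) 1 = r *\<^sub>R cmul c 1" for r c
    by (simp add: scaleR_conv_of_real cmul_mult cmul_real)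
  show "norm (cmul c 1) \<le> norm c * 1" for c by (simp add: norm_cmul)
qed

lemma exp_phi: "exp (cmul c 1) = cmul (exp c) 1"
proof -
  have "cmul (exp c) 1 = (\<Sum>n. cmul (c ^ n /\<^sub>R fact n) 1)"
    unfolding exp_def by (rule bounded_linear.suminf[OF bl_phi summable_exp_generic])
  also have "\<dots> = (\<Sum>n. (cmul c 1) ^ n /\<^sub>R fact n)"
    using phi_scaleR by (simp add: phi_power)
  also have "\<dots> = exp (cmul c 1)" by (simp add: exp_def)
  finally show ?thesis by simp
qed

lemma expm1_factor: "\<exists>F. exp D = 1 + F * D \<and> norm F \<le> exp (norm D)"
proof -
  define f where "f n = D ^ n /\<^sub>R fact (Suc n)" for n
  have nf: "norm (f n) \<le> norm D ^ n /\<^sub>R fact n" for n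
  proof -
    have "norm (f n) = norm (D ^ n) / fact (Suc n)" by (simp add: f_def divide_inverse_commute del: fact_Suc)
    also have "\<dots> \<le> norm D ^ n / fact (Suc n)"
      by (rule divide_right_mono[OF norm_power_ineq]) simp
    also have "\<dots> \<le> norm D ^ n / fact n"
      by (intro divide_left_mono) (auto simp: fact_mono)
    finally show ?thesis by (simp add: divide_inverse_commute)
  qed
  have snf: "summable (\<lambda>n. norm (f n))"
    by (rule summable_comparison_test[OF _ summable_exp_generic[of "norm D"]]) (use nf in auto)
  have sf: "summable f" using snf summable_norm_cancel by blast
  define F where "F = suminf f"
  have "F * D = (\<Sum>n. f n * D)" unfolding F_def by (rule suminf_mult2[OF sf])
  also have "\<dots> = (\<Sum>n. D ^ Suc n /\<^sub>R fact (Suc n))"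
    by (simp add: f_def power_Suc2 del: power_Suc fact_Suc)
  also have "\<dots> = exp D - 1"
    using suminf_split_head[OF summable_exp_generic[of D]] by (simp add: exp_def del: fact_Suc)
  finally have e: "exp D = 1 + F * D" by simp
  have "norm F \<le> (\<Sum>n. norm (f n))" unfolding F_def by (rule summable_norm[OF snf])
  also have "\<dots> \<le> (\<Sum>n. norm D ^ n /\<^sub>R fact n)"
    by (rule suminf_le[OF nf snf summable_exp_generic])
  also have "\<dots> = exp (norm D)" by (simp add: exp_def)
  finally show ?thesis using e by blast
qed

end

context cstate begin

lemma CS2: "(cmod (\<omega> (x * D)))^2 \<le> (norm x)^2 * Re (\<omega> (st D * D))"
proof -
  have "(cmod (\<omega> (st (st x) * D)))^2 \<le> Re (\<omega> (st (st x) * st x)) * Re (\<omega> (st D * D))" by (rule CS)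
  moreover have "Re (\<omega> (x * st x)) \<le> (norm x)^2"
  proof -
    have "Re (\<omega> (x * st x)) \<le> cmod (\<omega> (x * st x))" by (rule complex_Re_le_cmod)
    also have "\<dots> \<le> norm (x * st x)" by (rule om_bound)
    also have "\<dots> \<le> norm x * norm (st x)" by (rule norm_mult_ineq)
    finally show ?thesis by (simp add: norm_st power2_eq_square)
  qed
  ultimately show ?thesis using om_pos_re[of D]
    by (simp) (meson mult_right_mono order_trans)
qed

end

theorem lemmaA4:
  fixes cmul :: "complex \<Rightarrow> 'a::{real_normed_algebra_1,banach} \<Rightarrow> 'a"
    and st :: "'a \<Rightarrow> 'a"
    and M :: "int set \<Rightarrow> 'a set"
    and \<gamma> :: "int \<Rightarrow> 'a \<Rightarrow> 'a"
    and \<omega> :: "'a \<Rightarrow> complex"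
    and In :: "nat \<Rightarrow> int set"
    and x :: "nat \<Rightarrow> 'a"
    and y :: 'a
  assumes ql: "quasi_local cmul st M"
    and act: "translation_action cmul st M \<gamma>"
    and hchi: "invariant_multiplicative_state cmul st M \<gamma> \<omega>"
    and In_int: "\<And>n. fin_interval (In n)"
    and In_mono: "\<And>n. In n \<subseteq> In (Suc n)"
    and In_union: "(\<Union>n. In n) = UNIV"
    and y_loc: "y \<in> local_part M"
    and x_bdd: "\<exists>B. \<forall>n. norm (x n) \<le> B"
    and x_conv: "convergent (\<lambda>n. \<omega> (x n))"
  shows "(\<lambda>n. \<omega> (x n * exp ((1 / real (card (In n))) *\<^sub>R (\<Sum>k\<in>In n. \<gamma> k y))))
           \<longlonglongrightarrow> lim (\<lambda>n. \<omega> (x n)) * exp (\<omega> y)"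
proof -
  have "cstate cmul st \<omega>"
    using ql hchi unfolding cstate_def cstar_def cstate_axioms_def quasi_local_def invariant_multiplicative_state_def
    by blast
  then interpret cstate cmul st \<omega> .
  have Mw: "wstar_subalgebra cmul st (M I)" if "fin_interval I" for I
    using ql that unfolding quasi_local_def by blast
  have M1: "1 \<in> M I" if "fin_interval I" for I using Mw[OF that] unfolding wstar_subalgebra_def by blast
  have Madd: "p + q \<in> M I" if "fin_interval I" "p \<in> M I" "q \<in> M I" for I p q
    using Mw[OF that(1)] that unfolding wstar_subalgebra_def by blast
  have Mcmul: "cmul c p \<in> M I" if "fin_interval I" "p \<in> M I" for I p c
    using Mw[OF that(1)] that unfolding wstar_subalgebra_def by blast
  have Mst: "st p \<in> M I" if "fin_interval I" "p \<in> M I" for I p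
    using Mw[OF that(1)] that unfolding wstar_subalgebra_def by blast
  have om_mult: "\<omega> (p * q) = \<omega> p * \<omega> q"
    if "fin_interval I" "fin_interval J" "I \<inter> J = {}" "p \<in> M I" "q \<in> M J" for I J p q
    using hchi that unfolding invariant_multiplicative_state_def by blast
  have om_inv: "\<omega> (\<gamma> j p) = \<omega> p" for j p
    using hchi unfolding invariant_multiplicative_state_def by blast
  have gaut: "star_automorphism cmul st (\<gamma> j)" for j
    using act unfolding translation_action_def by blast
  have gim: "\<gamma> j ` M I = M ((\<lambda>i. i + j) ` I)" if "fin_interval I" for j I
    using act that unfolding translation_action_def by blast
  obtain I0 where I0: "fin_interval I0" "y \<in> M I0"
    using y_loc unfolding local_part_def by blast
  then obtain a0 b0 where ab: "a0 \<le> b0" "I0 = {a0..b0}" unfolding fin_interval_def by blast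
  define w where "w = b0 - a0"
  have w0: "w \<ge> 0" using ab by (simp add: w_def)
  define J where "J k = {a0 + k..b0 + k}" for k
  have finJ: "fin_interval (J k)" for k unfolding J_def fin_interval_def using ab by auto
  have gyJ: "\<gamma> k y \<in> J' " if "J' = M (J k)" for k J'
  proof -
    have "\<gamma> k y \<in> \<gamma> k ` M I0" using I0 by blast
    then show ?thesis using gim[OF I0(1), of k] ab that by (simp add: J_def)
  qed
  define c where "c = \<omega> y"
  define p where "p = cmul c 1"
  define u where "u k = \<gamma> k y - p" for k
  have uM: "u k \<in> M (J k)" for k
  proof -
    have "u k = \<gamma> k y + cmul (-1) p"
      unfolding u_def using cmul_real[of "-1" p] by simp
    then show ?thesis unfolding p_def using finJ gyJ M1 Madd Mcmul by metis
  qed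
  have stuM: "st (u k) \<in> M (J k)" for k using Mst[OF finJ uM] .
  have ou: "\<omega> (u k) = 0" for k by (simp add: u_def om_diff om_inv p_def om_cmul c_def)
  have zero: "\<omega> (st (u k) * u l) = 0" if "\<bar>k - l\<bar> > w" for k l
  proof -
    have "J k \<inter> J l = {}" using that unfolding J_def w_def by auto
    then show ?thesis using om_mult[OF finJ finJ _ stuM uM] ou by simp
  qed
  define R where "R = norm y"
  define E where "E = (R + cmod c)^2"
  have nu: "norm (u k) \<le> R + cmod c" for k
  proof -
    have "norm (u k) \<le> norm (\<gamma> k y) + norm p" unfolding u_def by (rule norm_triangle_ineq4)
    then show ?thesis using aut_norm_le[OF gaut, of k y] by (simp add: p_def norm_cmul R_def)
  qed
  have Rc0: "0 \<le> R + cmod c" by (simp add: R_def)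
  have tb: "cmod (\<omega> (st (u k) * u l)) \<le> E" for k l
  proof -
    have "cmod (\<omega> (st (u k) * u l)) \<le> norm (st (u k) * u l)" by (rule om_bound)
    also have "\<dots> \<le> norm (u k) * norm (u l)" using norm_mult_ineq norm_st by metis
    also have "\<dots> \<le> (R + cmod c) * (R + cmod c)" using nu Rc0 by (intro mult_mono) auto
    finally show ?thesis by (simp add: E_def power2_eq_square)
  qed
  define N where "N n = card (In n)" for n
  have finI: "finite (In n)" for n using In_int[of n] unfolding fin_interval_def by auto
  have Npos: "N n > 0" for n using In_int[of n] finI[of n] unfolding fin_interval_def N_def
    by (metis atLeastAtMost_iff card_gt_0_iff empty_iff order_refl)
  define S where "S n = (1 / real (card (In n))) *\<^sub>R (\<Sum>k\<in>In n. \<gamma> k y)" for n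
  define D where "D n = S n - p" for n
  have Deq: "D n = (1 / real (N n)) *\<^sub>R (\<Sum>k\<in>In n. u k)" for n
  proof -
    have "(\<Sum>k\<in>In n. u k) = (\<Sum>k\<in>In n. \<gamma> k y) - real (N n) *\<^sub>R p"
      by (simp add: u_def sum_subtractf N_def sum_constant_scaleR scaleR_conv_of_real)
    then show ?thesis using Npos[of n] by (simp add: D_def S_def N_def scaleR_diff_right)
  qed
  have nD: "norm (D n) \<le> R + cmod c" for n
  proof -
    have "norm (\<Sum>k\<in>In n. u k) \<le> (\<Sum>k\<in>In n. R + cmod c)"
      by (rule order_trans[OF norm_sum sum_mono]) (use nu in auto)
    also have "\<dots> = real (N n) * (R + cmod c)" by (simp add: N_def)
    finally show ?thesis using Npos[of n] by (simp add: Deq field_simps)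
  qed
  define V where "V n = Re (\<omega> (st (D n) * D n))" for n
  have V0: "V n \<ge> 0" for n unfolding V_def by (rule om_pos_re)
  have Vb: "V n \<le> (2 * w + 1) * E / real (N n)" for n
  proof -
    have inner: "(\<Sum>l\<in>In n. cmod (\<omega> (st (u k) * u l))) \<le> (2 * w + 1) * E" for k
    proof -
      have "(\<Sum>l\<in>In n. cmod (\<omega> (st (u k) * u l))) \<le> (\<Sum>l\<in>In n. if l \<in> {k - w..k + w} then E else 0)"
        using zero tb by (intro sum_mono) (auto simp: abs_le_iff not_le)
      also have "\<dots> = E * real (card (In n \<inter> {k - w..k + w}))"
        using finI[of n] by (simp add: sum.If_cases Int_def)
      also have "\<dots> \<le> E * real (card {k - w..k + w})"
      proof -
        have "card (In n \<inter> {k - w..k + w}) \<le> card {k - w..k + w}" by (rule card_mono) auto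
        then show ?thesis by (intro mult_left_mono) (auto simp: E_def simp del: card_atLeastAtMost_int)
      qed
      also have "\<dots> = (2 * w + 1) * E" using w0 by simp
      finally show ?thesis .
    qed
    have "st (D n) * D n = (1 / real (N n))^2 *\<^sub>R (\<Sum>k\<in>In n. \<Sum>l\<in>In n. st (u k) * u l)"
      by (simp add: Deq st_scaleR st_sum sum_product power2_eq_square)
    then have "\<omega> (st (D n) * D n) = of_real ((1 / real (N n))^2) * (\<Sum>k\<in>In n. \<Sum>l\<in>In n. \<omega> (st (u k) * u l))"
      by (simp add: om_scaleR om_sum)
    then have "V n \<le> (1 / real (N n))^2 * cmod (\<Sum>k\<in>In n. \<Sum>l\<in>In n. \<omega> (st (u k) * u l))"
      unfolding V_def by (metis complex_Re_le_cmod norm_mult norm_of_real abs_of_nonneg zero_le_power2)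
    also have "\<dots> \<le> (1 / real (N n))^2 * (\<Sum>k\<in>In n. (2 * w + 1) * E)"
    proof (intro mult_left_mono)
      show "cmod (\<Sum>k\<in>In n. \<Sum>l\<in>In n. \<omega> (st (u k) * u l)) \<le> (\<Sum>k\<in>In n. (2 * w + 1) * E)"
        by (rule order_trans[OF norm_sum sum_mono], rule order_trans[OF norm_sum inner])
    qed simp
    also have "\<dots> = (2 * w + 1) * E / real (N n)" using Npos[of n] by (simp add: N_def power2_eq_square)
    finally show ?thesis .
  qed
  obtain B where B: "\<And>n. norm (x n) \<le> B" using x_bdd by blast
  have B0: "B \<ge> 0" using B[of 0] norm_ge_zero order_trans by blast
  have "\<forall>n. \<exists>F. exp (D n) = 1 + F * D n \<and> norm F \<le> exp (norm (D n))"
    using expm1_factor by blast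
  then obtain F where F: "\<And>n. exp (D n) = 1 + F n * D n" "\<And>n. norm (F n) \<le> exp (norm (D n))"
    by metis
  define Z where "Z n = \<omega> (x n * F n * D n)" for n
  have Teq: "\<omega> (x n * exp (S n)) = exp c * (\<omega> (x n) + Z n)" for n
  proof -
    have pc: "p * D n = D n * p" unfolding p_def using cmul_one_mult cmul_one_mult' by metis
    have "exp (S n) = exp (p + D n)" by (simp add: D_def)
    also have "\<dots> = exp p * exp (D n)" by (rule exp_add_commuting[OF pc])
    also have "\<dots> = cmul (exp c) 1 * (1 + F n * D n)" by (simp add: p_def exp_phi F)
    also have "\<dots> = cmul (exp c) (1 + F n * D n)" by (simp add: cmul_one_mult[symmetric])
    finally have "x n * exp (S n) = cmul (exp c) (x n + x n * F n * D n)"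
      by (simp add: cmul_right[symmetric] distrib_left mult.assoc)
    then show ?thesis by (simp add: om_cmul om_add Z_def)
  qed
  define K where "K = (B * exp (R + cmod c))^2 * ((2 * w + 1) * E)"
  have Zb: "norm (Z n) \<le> sqrt (K * inverse (real (N n)))" for n
  proof -
    have "norm (x n * F n) \<le> B * exp (R + cmod c)"
    proof -
      have "norm (x n * F n) \<le> norm (x n) * norm (F n)" by (rule norm_mult_ineq)
      also have "\<dots> \<le> B * exp (R + cmod c)"
        using B[of n] F(2)[of n] nD[of n] B0 by (intro mult_mono) (auto intro: order_trans)
      finally show ?thesis .
    qed
    then have nxF: "(norm (x n * F n))^2 \<le> (B * exp (R + cmod c))^2"
      by (intro power_mono) auto
    have "(cmod (Z n))^2 \<le> (norm (x n * F n))^2 * V n"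
      unfolding Z_def V_def by (rule CS2)
    also have "\<dots> \<le> (B * exp (R + cmod c))^2 * ((2 * w + 1) * E / real (N n))"
      using nxF Vb[of n] V0[of n] by (intro mult_mono) auto
    also have "\<dots> = K * inverse (real (N n))" by (simp add: K_def divide_inverse)
    finally show ?thesis by (simp add: real_le_rsqrt)
  qed
  have Nlim: "filterlim (\<lambda>n. real (N n)) at_top sequentially"
    unfolding N_def by (rule card_tendsto[OF finI In_mono In_union])
  have "(\<lambda>n. sqrt (K * inverse (real (N n)))) \<longlonglongrightarrow> sqrt (K * 0)"
    by (intro tendsto_real_sqrt tendsto_mult tendsto_const tendsto_inverse_0_at_top Nlim)
  then have g0: "(\<lambda>n. sqrt (K * inverse (real (N n)))) \<longlonglongrightarrow> 0" by simp
  have ev: "eventually (\<lambda>n. norm (Z n) \<le> sqrt (K * inverse (real (N n)))) sequentially"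
    by (rule always_eventually) (use Zb in blast)
  have Z0: "Z \<longlonglongrightarrow> 0" by (rule Lim_null_comparison[OF ev g0])
  have xl: "(\<lambda>n. \<omega> (x n)) \<longlonglongrightarrow> lim (\<lambda>n. \<omega> (x n))"
    using x_conv by (simp add: convergent_LIMSEQ_iff)
  have "(\<lambda>n. exp c * (\<omega> (x n) + Z n)) \<longlonglongrightarrow> exp c * (lim (\<lambda>n. \<omega> (x n)) + 0)"
    by (intro tendsto_mult tendsto_const tendsto_add xl Z0)
  then have "(\<lambda>n. \<omega> (x n * exp (S n))) \<longlonglongrightarrow> lim (\<lambda>n. \<omega> (x n)) * exp c"
    by (simp add: Teq mult.commute)
  then show ?thesis by (simp add: S_def c_def)
qed
end
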